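(* Let $k\in\mathbb{N}$. For every $\mathbf{f}=(f_1,f_2)\in (C^\infty[-1,1])^2$, \[ \operatorname{Re}\langle\tilde{\mathbf{L}}_\square\mathbf{f},\mathbf{f}\rangle_k\le-\frac12\|\mathbf{f}\|_k^2, \] where $\tilde{\mathbf{L}}_\square\mathbf{f}=\big(f_2-yf_1'-f_1(-1),\ -f_2-yf_2'+f_1''\big)$.
   Context: Sesquilinear forms on pairs of functions on $[-1,1]$: $\langle\mathbf{f},\mathbf{g}\rangle_0:=f_1(-1)\overline{g_1(-1)}+\langle f_1,g_1\rangle_{\dot H^1(-1,1)}+\langle f_2,g_2\rangle_{L^2(-1,1)}$ and $\langle\mathbf{f},\mathbf{g}\rangle_k:=\langle\mathbf{f},\mathbf{g}\rangle_0+\langle f_1,g_1\rangle_{\dot H^{k+1}(-1,1)}+\langle f_2,g_2\rangle_{\dot H^k(-1,1)}$, with $\|\mathbf{f}\|_k^2=\langle\mathbf{f},\mathbf{f}\rangle_k$. Here $f_1(-1)$ in the first component of $\tilde{\mathbf{L}}_\square\mathbf{f}$ denotes the constant function. *)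

theory Defs
  imports "HOL-Analysis.Analysis"
begin

fun nderiv :: "nat \<Rightarrow> (real \<Rightarrow> complex) \<Rightarrow> real \<Rightarrow> complex" where
  "nderiv 0 g = g"
| "nderiv (Suc n) g = (\<lambda>y. vector_derivative (nderiv n g) (at y within {-1..1}))"

definition smooth_on_I :: "(real \<Rightarrow> complex) \<Rightarrow> bool" where
  "smooth_on_I g \<longleftrightarrow> (\<forall>n. \<forall>y\<in>{-1..1}. nderiv n g differentiable (at y within {-1..1}))"

definition Hdot_inner :: "nat \<Rightarrow> (real \<Rightarrow> complex) \<Rightarrow> (real \<Rightarrow> complex) \<Rightarrow> complex" where
  "Hdot_inner m f g = integral {-1..1} (\<lambda>y. nderiv m f y * cnj (nderiv m g y))"

definition inner0 :: "(real \<Rightarrow> complex) \<times> (real \<Rightarrow> complex) \<Rightarrow> (real \<Rightarrow> complex) \<times> (real \<Rightarrow> complex) \<Rightarrow> complex" where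
  "inner0 f g = fst f (-1) * cnj (fst g (-1)) + Hdot_inner 1 (fst f) (fst g) + Hdot_inner 0 (snd f) (snd g)"

definition innerk :: "nat \<Rightarrow> (real \<Rightarrow> complex) \<times> (real \<Rightarrow> complex) \<Rightarrow> (real \<Rightarrow> complex) \<times> (real \<Rightarrow> complex) \<Rightarrow> complex" where
  "innerk k f g = inner0 f g + Hdot_inner (k+1) (fst f) (fst g) + Hdot_inner k (snd f) (snd g)"

definition normk :: "nat \<Rightarrow> (real \<Rightarrow> complex) \<times> (real \<Rightarrow> complex) \<Rightarrow> real" where
  "normk k f = sqrt (Re (innerk k f f))"

definition Lsq :: "(real \<Rightarrow> complex) \<times> (real \<Rightarrow> complex) \<Rightarrow> (real \<Rightarrow> complex) \<times> (real \<Rightarrow> complex)" where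
  "Lsq f = ((\<lambda>y. snd f y - complex_of_real y * nderiv 1 (fst f) y - fst f (-1)),
            (\<lambda>y. - snd f y - complex_of_real y * nderiv 1 (snd f) y + nderiv 2 (fst f) y))"

end

theory Submission
  imports Defs
begin
lemma nderiv_hasder:
  assumes "smooth_on_I g" "y \<in> {-1..1}"
  shows "(nderiv n g has_vector_derivative nderiv (Suc n) g y) (at y within {-1..1})"
  using assms unfolding smooth_on_I_def by (simp add: vector_derivative_works[symmetric])

lemma nderiv_cont:
  assumes "smooth_on_I g"
  shows "continuous_on {-1..1} (nderiv n g)"
  using assms unfolding smooth_on_I_def
  by (meson continuous_on_eq_continuous_within differentiable_imp_continuous_within)

lemma nderiv_chain:
  assumes F0: "\<And>y. y \<in> {-1..1} \<Longrightarrow> h y = F 0 y"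
    and FD: "\<And>j y. y \<in> {-1..1} \<Longrightarrow> (F j has_vector_derivative F (Suc j) y) (at y within {-1..1})"
  shows "y \<in> {-1..1} \<Longrightarrow> nderiv n h y = F n y"
proof (induction n arbitrary: y)
  case 0
  then show ?case using F0 by simp
next
  case (Suc n)
  have "(nderiv n h has_vector_derivative F (Suc n) y) (at y within {-1..1})"
    by (rule has_vector_derivative_transform_within[OF FD[OF Suc.prems], where d=1])
       (use Suc in auto)
  then show ?case
    using vector_derivative_within_closed_interval[of "-1" 1 y] Suc.prems by simp
qed

lemma Re_integral:
  "f integrable_on S \<Longrightarrow> Re (integral S f) = integral S (\<lambda>x. Re (f x))"
  using integral_linear[OF _ bounded_linear_Re, of f S] by (simp add: o_def)

lemma energy:
  fixes u v u' v' :: "real \<Rightarrow> complex" and c :: real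
  assumes cu: "continuous_on {-1..1} u" and cv: "continuous_on {-1..1} v"
    and cu': "continuous_on {-1..1} u'" and cv': "continuous_on {-1..1} v'"
    and du: "\<And>y. y \<in> {-1..1} \<Longrightarrow> (u has_vector_derivative u' y) (at y within {-1..1})"
    and dv: "\<And>y. y \<in> {-1..1} \<Longrightarrow> (v has_vector_derivative v' y) (at y within {-1..1})"
  shows "Re (integral {-1..1} (\<lambda>y. (v' y - of_real y * u' y - of_real c * u y) * cnj (u y)))
       + Re (integral {-1..1} (\<lambda>y. (- of_real c * v y - of_real y * v' y + u' y) * cnj (v y)))
   = Re (u 1 * cnj (v 1)) - (1/2) * (Re (u 1 * cnj (u 1)) + Re (v 1 * cnj (v 1)))
     - (Re (u (-1) * cnj (v (-1))) + (1/2) * (Re (u (-1) * cnj (u (-1))) + Re (v (-1) * cnj (v (-1)))))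
     - (c - 1/2) * (Re (integral {-1..1} (\<lambda>y. u y * cnj (u y))) + Re (integral {-1..1} (\<lambda>y. v y * cnj (v y))))"
proof -
  define I :: "real set" where "I = {-1..1}"
  define K where "K y = u y * cnj (v y) - of_real (y / 2) * (u y * cnj (u y) + v y * cnj (v y))" for y
  define K' where "K' y = u' y * cnj (v y) + u y * cnj (v' y) - 1/2 * (u y * cnj (u y) + v y * cnj (v y))
      - of_real y / 2 * (u' y * cnj (u y) + u y * cnj (u' y) + v' y * cnj (v y) + v y * cnj (v' y))" for y
  have dK: "(K has_vector_derivative K' y) (at y within {-1..1})" if y: "y \<in> {-1..1}" for y
  proof -
    have d1: "((\<lambda>y. complex_of_real (y/2)) has_vector_derivative of_real (1/2)) (at y within {-1..1})"
      by (rule has_vector_derivative_of_real) (auto intro!: derivative_eq_intros)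
    note duy = du[OF y] and dvy = dv[OF y]
    note cu = has_vector_derivative_cnj[OF duy] and cv = has_vector_derivative_cnj[OF dvy]
    have "(K has_vector_derivative
        (u y * cnj (v' y) + u' y * cnj (v y)) -
        (of_real (y/2) * ((u y * cnj (u' y) + u' y * cnj (u y)) + (v y * cnj (v' y) + v' y * cnj (v y)))
          + of_real (1/2) * (u y * cnj (u y) + v y * cnj (v y)))) (at y within {-1..1})"
      unfolding K_def
      by (intro has_vector_derivative_diff has_vector_derivative_mult has_vector_derivative_add
            duy dvy cu cv d1)
    then show ?thesis
      by (rule has_vector_derivative_eq_rhs) (simp add: K'_def algebra_simps)
  qed
  have ci: "continuous_on {-1..1} (\<lambda>y. complex_of_real y)"
    by (intro continuous_intros)
  have int1: "(\<lambda>y. (v' y - of_real y * u' y - of_real c * u y) * cnj (u y)) integrable_on {-1..1}"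
    by (intro integrable_continuous_interval continuous_intros cu cv cu' cv' ci)
  have int2: "(\<lambda>y. (- of_real c * v y - of_real y * v' y + u' y) * cnj (v y)) integrable_on {-1..1}"
    by (intro integrable_continuous_interval continuous_intros cu cv cu' cv' ci)
  have int3: "(\<lambda>y. u y * cnj (u y)) integrable_on {-1..1}"
    by (intro integrable_continuous_interval continuous_intros cu cv cu' cv' ci)
  have int4: "(\<lambda>y. v y * cnj (v y)) integrable_on {-1..1}"
    by (intro integrable_continuous_interval continuous_intros cu cv cu' cv' ci)
  have ReI: "((\<lambda>y. Re (f y)) has_integral Re (integral {-1..1} f)) {-1..1}"
    if "f integrable_on {-1..1}" for f :: "real \<Rightarrow> complex"
    using has_integral_linear[OF integrable_integral[OF that] bounded_linear_Re] by (simp add: o_def)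
  have FTC: "(K' has_integral K 1 - K (-1)) {-1..1}"
    by (rule fundamental_theorem_of_calculus) (auto intro: dK)
  hence hK: "((\<lambda>y. Re (K' y)) has_integral Re (K 1 - K (-1))) {-1..1}"
    using has_integral_linear[OF _ bounded_linear_Re] by (force simp: o_def)
  have h1: "((\<lambda>y. Re ((v' y - of_real y * u' y - of_real c * u y) * cnj (u y)) + Re ((- of_real c * v y - of_real y * v' y + u' y) * cnj (v y)))
     has_integral (Re (integral {-1..1} (\<lambda>y. (v' y - of_real y * u' y - of_real c * u y) * cnj (u y)))
       + Re (integral {-1..1} (\<lambda>y. (- of_real c * v y - of_real y * v' y + u' y) * cnj (v y))))) {-1..1}"
    by (intro has_integral_add ReI int1 int2)
  have h2: "((\<lambda>y. Re (K' y) - (c - 1/2) * (Re (u y * cnj (u y)) + Re (v y * cnj (v y))))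
     has_integral (Re (K 1 - K (-1)) - (c - 1/2) * (Re (integral {-1..1} (\<lambda>y. u y * cnj (u y))) + Re (integral {-1..1} (\<lambda>y. v y * cnj (v y)))))) {-1..1}"
    by (intro has_integral_diff hK has_integral_mult_right has_integral_add ReI int3 int4)
  have eq: "(\<lambda>y. Re ((v' y - of_real y * u' y - of_real c * u y) * cnj (u y)) + Re ((- of_real c * v y - of_real y * v' y + u' y) * cnj (v y)))
     = (\<lambda>y. Re (K' y) - (c - 1/2) * (Re (u y * cnj (u y)) + Re (v y * cnj (v y))))"
    by (rule ext) (simp add: K'_def algebra_simps add_divide_distrib)
  have bd: "Re (K 1 - K (-1)) = Re (u 1 * cnj (v 1)) - (1/2) * (Re (u 1 * cnj (u 1)) + Re (v 1 * cnj (v 1)))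
     - (Re (u (-1) * cnj (v (-1))) + (1/2) * (Re (u (-1) * cnj (u (-1))) + Re (v (-1) * cnj (v (-1)))))"
    by (simp add: K_def algebra_simps add_divide_distrib)
  show ?thesis
    using has_integral_unique[OF h1[unfolded eq] h2] bd by linarith
qed

lemma N_nonneg:
  fixes w :: "real \<Rightarrow> complex"
  assumes "continuous_on {-1..1} w"
  shows "0 \<le> Re (integral {-1..1} (\<lambda>y. w y * cnj (w y)))"
proof -
  have "(\<lambda>y. w y * cnj (w y)) integrable_on {-1..1}"
    by (rule integrable_continuous_interval, rule continuous_on_mult[OF assms continuous_on_cnj[OF assms]])
  then have "((\<lambda>y. Re (w y * cnj (w y))) has_integral Re (integral {-1..1} (\<lambda>y. w y * cnj (w y)))) {-1..1}"
    using has_integral_linear[OF integrable_integral bounded_linear_Re] by (force simp: o_def)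
  then show ?thesis
    by (rule has_integral_nonneg) (simp add: add_nonneg_nonneg)
qed

lemma L1: "Re (x * cnj y) - 1/2 * (Re (x * cnj x) + Re (y * cnj y)) \<le> 0"
proof -
  define S where "S = (Re x - Re y)^2 + (Im x - Im y)^2"
  have S0: "0 \<le> S" by (simp add: S_def)
  have "Re (x * cnj y) - 1/2 * (Re (x * cnj x) + Re (y * cnj y)) = - 1/2 * S"
    by (simp add: S_def algebra_simps power2_eq_square)
  then show ?thesis using S0 by linarith
qed

lemma L2: "- (Re (x * cnj y) + 1/2 * (Re (x * cnj x) + Re (y * cnj y))) \<le> 0"
proof -
  define S where "S = (Re x + Re y)^2 + (Im x + Im y)^2"
  have S0: "0 \<le> S" by (simp add: S_def)
  have "- (Re (x * cnj y) + 1/2 * (Re (x * cnj x) + Re (y * cnj y))) = - 1/2 * S"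
    by (simp add: S_def algebra_simps power2_eq_square)
  then show ?thesis using S0 by linarith
qed

lemma L3: "Re ((y + x - z) * cnj z) - (Re (x * cnj y) + 1/2 * (Re (x * cnj x) + Re (y * cnj y)))
   \<le> - 1/2 * Re (z * cnj z)"
proof -
  define S where "S = (Re x + Re y - Re z)^2 + (Im x + Im y - Im z)^2"
  have S0: "0 \<le> S" by (simp add: S_def)
  have "Re ((y + x - z) * cnj z) - (Re (x * cnj y) + 1/2 * (Re (x * cnj x) + Re (y * cnj y)))
      = - 1/2 * Re (z * cnj z) - 1/2 * S"
    by (simp add: S_def algebra_simps power2_eq_square)
  then show ?thesis using S0 by linarith
qed

theorem lemma5p2:
  fixes k :: nat and f1 f2 :: "real \<Rightarrow> complex"
  assumes "k \<ge> 1"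
    and s1: "smooth_on_I f1" and s2: "smooth_on_I f2"
  shows "Re (innerk k (Lsq (f1, f2)) (f1, f2)) \<le> - (1/2) * (normk k (f1, f2))\<^sup>2"
proof -
  define g1 where "g1 = (\<lambda>y. f2 y - complex_of_real y * nderiv 1 f1 y - f1 (-1))"
  define g2 where "g2 = (\<lambda>y. - f2 y - complex_of_real y * nderiv 1 f2 y + nderiv 2 f1 y)"
  have L: "Lsq (f1, f2) = (g1, g2)" by (simp add: Lsq_def g1_def g2_def)
  define F1 where "F1 j y = nderiv j f2 y - complex_of_real y * nderiv (Suc j) f1 y
      - of_nat j * nderiv j f1 y - (if j = 0 then f1 (-1) else 0)" for j y
  define F2 where "F2 j y = - nderiv j f2 y - complex_of_real y * nderiv (Suc j) f2 y
      - of_nat j * nderiv j f2 y + nderiv (Suc (Suc j)) f1 y" for j y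
  have dy: "((\<lambda>y. complex_of_real y) has_vector_derivative 1) (at y within {-1..1})" for y
    using has_vector_derivative_of_real[OF DERIV_ident] by simp
  have D1: "(F1 j has_vector_derivative F1 (Suc j) y) (at y within {-1..1})" if y: "y \<in> {-1..1}" for j y
  proof -
    have "(F1 j has_vector_derivative
       nderiv (Suc j) f2 y - (complex_of_real y * nderiv (Suc (Suc j)) f1 y + 1 * nderiv (Suc j) f1 y)
       - of_nat j * nderiv (Suc j) f1 y - 0) (at y within {-1..1})"
      unfolding F1_def[abs_def]
      by (intro has_vector_derivative_diff has_vector_derivative_mult has_vector_derivative_mult_right
          has_vector_derivative_const nderiv_hasder s1 s2 y dy)
    then show ?thesis
      by (rule has_vector_derivative_eq_rhs) (simp add: F1_def algebra_simps)
  qed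
  have D2: "(F2 j has_vector_derivative F2 (Suc j) y) (at y within {-1..1})" if y: "y \<in> {-1..1}" for j y
  proof -
    have "(F2 j has_vector_derivative
       - nderiv (Suc j) f2 y - (complex_of_real y * nderiv (Suc (Suc j)) f2 y + 1 * nderiv (Suc j) f2 y)
       - of_nat j * nderiv (Suc j) f2 y + nderiv (Suc (Suc (Suc j))) f1 y) (at y within {-1..1})"
      unfolding F2_def[abs_def]
      by (intro has_vector_derivative_diff has_vector_derivative_add has_vector_derivative_minus
          has_vector_derivative_mult has_vector_derivative_mult_right
          nderiv_hasder s1 s2 y dy)
    then show ?thesis
      by (rule has_vector_derivative_eq_rhs) (simp add: F2_def algebra_simps)
  qed
  have C1: "y \<in> {-1..1} \<Longrightarrow> nderiv n g1 y = F1 n y" for n y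
  proof (rule nderiv_chain[where F=F1])
    show "g1 y = F1 0 y" for y by (simp add: F1_def g1_def)
    show "(F1 j has_vector_derivative F1 (Suc j) y) (at y within {-1..1})" if "y \<in> {-1..1}" for j y
      by (rule D1[OF that])
  qed
  have C2: "y \<in> {-1..1} \<Longrightarrow> nderiv n g2 y = F2 n y" for n y
  proof (rule nderiv_chain[where F=F2])
    show "g2 y = F2 0 y" for y by (simp add: F2_def g2_def numeral_2_eq_2)
    show "(F2 j has_vector_derivative F2 (Suc j) y) (at y within {-1..1})" if "y \<in> {-1..1}" for j y
      by (rule D2[OF that])
  qed
  define I :: "real set" where "I = {-1..1}"
  define N where "N w = Re (integral {-1..1} (\<lambda>y. w y * cnj (w y)))" for w :: "real \<Rightarrow> complex"
  have hg1: "Hdot_inner 1 g1 f1 = integral {-1..1} (\<lambda>y. (nderiv (Suc 0) f2 y - complex_of_real y * nderiv (Suc (Suc 0)) f1 y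
      - complex_of_real 1 * nderiv (Suc 0) f1 y) * cnj (nderiv (Suc 0) f1 y))"
    unfolding Hdot_inner_def One_nat_def
    by (rule integral_cong) (simp add: C1 F1_def del: nderiv.simps)
  have hg2: "Hdot_inner 0 g2 f2 = integral {-1..1} (\<lambda>y. (- complex_of_real 1 * nderiv 0 f2 y - complex_of_real y * nderiv (Suc 0) f2 y
      + nderiv (Suc (Suc 0)) f1 y) * cnj (nderiv 0 f2 y))"
    unfolding Hdot_inner_def
    by (rule integral_cong) (simp add: C2 F2_def del: nderiv.simps)
  have hg3: "Hdot_inner (k+1) g1 f1 = integral {-1..1} (\<lambda>y. (nderiv (Suc k) f2 y - complex_of_real y * nderiv (Suc (Suc k)) f1 y
      - complex_of_real (real k + 1) * nderiv (Suc k) f1 y) * cnj (nderiv (Suc k) f1 y))"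
    unfolding Hdot_inner_def Suc_eq_plus1[symmetric]
    by (rule integral_cong) (simp add: C1 F1_def algebra_simps del: nderiv.simps)
  have hg4: "Hdot_inner k g2 f2 = integral {-1..1} (\<lambda>y. (- complex_of_real (real k + 1) * nderiv k f2 y - complex_of_real y * nderiv (Suc k) f2 y
      + nderiv (Suc (Suc k)) f1 y) * cnj (nderiv k f2 y))"
    unfolding Hdot_inner_def
    by (rule integral_cong) (simp add: C2 F2_def algebra_simps del: nderiv.simps)
  have E0: "Re (integral {-1..1} (\<lambda>y. (nderiv (Suc 0) f2 y - complex_of_real y * nderiv (Suc (Suc 0)) f1 y
      - complex_of_real 1 * nderiv (Suc 0) f1 y) * cnj (nderiv (Suc 0) f1 y)))
     + Re (integral {-1..1} (\<lambda>y. (- complex_of_real 1 * nderiv 0 f2 y - complex_of_real y * nderiv (Suc 0) f2 y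
      + nderiv (Suc (Suc 0)) f1 y) * cnj (nderiv 0 f2 y)))
     = Re (nderiv (Suc 0) f1 1 * cnj (nderiv 0 f2 1)) - (1/2) * (Re (nderiv (Suc 0) f1 1 * cnj (nderiv (Suc 0) f1 1)) + Re (nderiv 0 f2 1 * cnj (nderiv 0 f2 1)))
     - (Re (nderiv (Suc 0) f1 (-1) * cnj (nderiv 0 f2 (-1))) + (1/2) * (Re (nderiv (Suc 0) f1 (-1) * cnj (nderiv (Suc 0) f1 (-1))) + Re (nderiv 0 f2 (-1) * cnj (nderiv 0 f2 (-1)))))
     - (1 - 1/2) * (N (nderiv (Suc 0) f1) + N (nderiv 0 f2))"
    unfolding N_def
    by (rule energy[OF nderiv_cont[OF s1] nderiv_cont[OF s2] nderiv_cont[OF s1] nderiv_cont[OF s2] nderiv_hasder[OF s1] nderiv_hasder[OF s2]])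
  have Ek: "Re (integral {-1..1} (\<lambda>y. (nderiv (Suc k) f2 y - complex_of_real y * nderiv (Suc (Suc k)) f1 y
      - complex_of_real (real k + 1) * nderiv (Suc k) f1 y) * cnj (nderiv (Suc k) f1 y)))
     + Re (integral {-1..1} (\<lambda>y. (- complex_of_real (real k + 1) * nderiv k f2 y - complex_of_real y * nderiv (Suc k) f2 y
      + nderiv (Suc (Suc k)) f1 y) * cnj (nderiv k f2 y)))
     = Re (nderiv (Suc k) f1 1 * cnj (nderiv k f2 1)) - (1/2) * (Re (nderiv (Suc k) f1 1 * cnj (nderiv (Suc k) f1 1)) + Re (nderiv k f2 1 * cnj (nderiv k f2 1)))
     - (Re (nderiv (Suc k) f1 (-1) * cnj (nderiv k f2 (-1))) + (1/2) * (Re (nderiv (Suc k) f1 (-1) * cnj (nderiv (Suc k) f1 (-1))) + Re (nderiv k f2 (-1) * cnj (nderiv k f2 (-1)))))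
     - ((real k + 1) - 1/2) * (N (nderiv (Suc k) f1) + N (nderiv k f2))"
    unfolding N_def
    by (rule energy[OF nderiv_cont[OF s1] nderiv_cont[OF s2] nderiv_cont[OF s1] nderiv_cont[OF s2] nderiv_hasder[OF s1] nderiv_hasder[OF s2]])
  have g1m: "g1 (-1) = nderiv 0 f2 (-1) + nderiv (Suc 0) f1 (-1) - f1 (-1)"
    by (simp add: g1_def)
  have LHS: "Re (innerk k (Lsq (f1, f2)) (f1, f2)) = Re (g1 (-1) * cnj (f1 (-1)))
     + (Re (Hdot_inner 1 g1 f1) + Re (Hdot_inner 0 g2 f2)) + (Re (Hdot_inner (k+1) g1 f1) + Re (Hdot_inner k g2 f2))"
    by (simp add: L innerk_def inner0_def)
  have RHS0: "Re (innerk k (f1, f2) (f1, f2)) = Re (f1 (-1) * cnj (f1 (-1))) + N (nderiv 1 f1) + N (nderiv 0 f2)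
     + N (nderiv (k+1) f1) + N (nderiv k f2)"
    unfolding innerk_def inner0_def Hdot_inner_def N_def fst_conv snd_conv plus_complex.sel by (simp del: nderiv.simps)
  have RHS: "Re (innerk k (f1, f2) (f1, f2)) = Re (f1 (-1) * cnj (f1 (-1))) + N (nderiv (Suc 0) f1) + N (nderiv 0 f2)
     + N (nderiv (Suc k) f1) + N (nderiv k f2)"
  proof -
    have e1: "nderiv 1 f1 = nderiv (Suc 0) f1" by simp
    have e2: "nderiv (k+1) f1 = nderiv (Suc k) f1" by simp
    show ?thesis using RHS0 unfolding e1 e2 .
  qed
  have Np: "0 \<le> N (nderiv n f)" if "smooth_on_I f" for n f
    unfolding N_def by (rule N_nonneg[OF nderiv_cont[OF that]])
  have z0: "0 \<le> Re (f1 (-1) * cnj (f1 (-1)))" by simp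
  have nsq: "(normk k (f1, f2))\<^sup>2 = Re (innerk k (f1, f2) (f1, f2))"
  proof -
    have "0 \<le> Re (innerk k (f1, f2) (f1, f2))"
      using RHS Np[OF s1, of "Suc 0"] Np[OF s2, of 0] Np[OF s1, of "Suc k"] Np[OF s2, of k] z0 by linarith
    then show ?thesis unfolding normk_def by (rule real_sqrt_pow2)
  qed
  have b1: "Re (nderiv (Suc 0) f1 1 * cnj (nderiv 0 f2 1)) - (1/2) * (Re (nderiv (Suc 0) f1 1 * cnj (nderiv (Suc 0) f1 1)) + Re (nderiv 0 f2 1 * cnj (nderiv 0 f2 1))) \<le> 0"
    by (rule L1)
  have b2: "Re (nderiv (Suc k) f1 1 * cnj (nderiv k f2 1)) - (1/2) * (Re (nderiv (Suc k) f1 1 * cnj (nderiv (Suc k) f1 1)) + Re (nderiv k f2 1 * cnj (nderiv k f2 1))) \<le> 0"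
    by (rule L1)
  have b3: "- (Re (nderiv (Suc k) f1 (-1) * cnj (nderiv k f2 (-1))) + (1/2) * (Re (nderiv (Suc k) f1 (-1) * cnj (nderiv (Suc k) f1 (-1))) + Re (nderiv k f2 (-1) * cnj (nderiv k f2 (-1))))) \<le> 0"
    by (rule L2)
  have b4: "Re ((nderiv 0 f2 (-1) + nderiv (Suc 0) f1 (-1) - f1 (-1)) * cnj (f1 (-1)))
      - (Re (nderiv (Suc 0) f1 (-1) * cnj (nderiv 0 f2 (-1))) + (1/2) * (Re (nderiv (Suc 0) f1 (-1) * cnj (nderiv (Suc 0) f1 (-1))) + Re (nderiv 0 f2 (-1) * cnj (nderiv 0 f2 (-1)))))
      \<le> - 1/2 * Re (f1 (-1) * cnj (f1 (-1)))"
    by (rule L3)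
  have kk: "0 \<le> real k * (N (nderiv (Suc k) f1) + N (nderiv k f2))"
    using Np[OF s1, of "Suc k"] Np[OF s2, of k] by simp
  show ?thesis
    unfolding nsq LHS RHS hg1 hg2 hg3 hg4 g1m
    using E0 Ek b1 b2 b3 b4 kk by (simp add: algebra_simps)
qed

end
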